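(* Let $N = n+1\ge 3$ and let $\Delta_N$ be the regular unimodular triangulation of $P_{C_N}$ described below. For each cell $T\in\Delta_N$, the associated directed acyclic subnetwork $(\{0,\dots,N-1\},\mathcal{E}(T))$ is primitive, i.e. $\mathcal{E}(T)$ contains exactly $n=N-1$ directed edges.
   Context: $C_N$ is the cycle graph on vertices $0,\dots,N-1$ with edges $\{0,1\},\dots,\{N-2,N-1\},\{N-1,0\}$; $\mathbf{e}_1,\dots,\mathbf{e}_n$ is the standard basis of $\mathbb{R}^n$ with $\mathbf{e}_0=\mathbf{e}_N=\mathbf{0}$; $P_{C_N}=\operatorname{conv}\{\mathbf{e}_i-\mathbf{e}_j\mid\{i,j\}\text{ an edge}\}$. If $N$ is even, let $\Lambda_N=\{\boldsymbol{\lambda}\in\{-1,1\}^N\mid\sum\lambda_i=0\}$, and for $\boldsymbol{\lambda}\in\Lambda_N$ let $\mathbf{v}_0=\mathbf{0}$, $\mathbf{v}_i=\lambda_i(\mathbf{e}_{i-1}-\mathbf{e}_i)$ ($1\le i\le N$), $V=\{\mathbf{v}_0,\dots,\mathbf{v}_N\}$; then $\Delta_N=\{\operatorname{conv}(V\setminus\{\mathbf{v}_i\})\mid\boldsymbol{\lambda}\in\Lambda_N,\ 1\le i\le N,\ \lambda_i=\lambda_1\}$. If $N$ is odd, let $\Lambda_{j,N}=\{\boldsymbol{\lambda}\mid\lambda_j=0,\ \lambda_i\in\{\pm1\}\ (i\ne j),\ \sum\lambda_i=0\}$ and $\Delta_N=\{\operatorname{conv}(\{\mathbf{0}\}\cup\{\lambda_i(\mathbf{e}_{i-1}-\mathbf{e}_i)\mid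 1\le i\le N,\ i\ne j\})\mid\boldsymbol{\lambda}\in\Lambda_{j,N},\ 1\le j\le N\}$. For a cell $T$, $\mathcal{E}(T)=\{(i,j)\mid\{i,j\}\text{ an edge of }C_N,\ \mathbf{e}_i-\mathbf{e}_j\in T\}$ (ordered pairs, i.e. directed edges), and the directed acyclic subnetwork associated with $T$ is the directed graph $(\{0,\dots,N-1\},\mathcal{E}(T))$; it is called primitive if it has exactly $n=N-1$ directed edges. *)

theory Defs
  imports "HOL-Analysis.Analysis" "HOL-Analysis.Finite_Function_Topology"
begin

text \<open>Vectors of R^n (n = N - 1) are represented as finitely supported functions
  finitely supported maps, supported on coordinates 1..n. The standard basis vector e_i for
  1 \<le> i \<le> n is the indicator of coordinate i; e_0 = e_N = 0.\<close>

type_synonym vec = "nat \<Rightarrow>\<^sub>0 real"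

definition ebas :: "nat \<Rightarrow> nat \<Rightarrow> vec" where
  "ebas N i = (if 1 \<le> i \<and> i \<le> N - 1 then Poly_Mapping.single i 1 else 0)"

definition cyc_edge :: "nat \<Rightarrow> nat \<Rightarrow> nat \<Rightarrow> bool" where
  "cyc_edge N i j \<longleftrightarrow> i < N \<and> j < N \<and> (j = Suc i mod N \<or> i = Suc j mod N)"

definition P_cyc :: "nat \<Rightarrow> vec set" where
  "P_cyc N = convex hull {ebas N i - ebas N j | i j. cyc_edge N i j}"

definition vvec :: "nat \<Rightarrow> (nat \<Rightarrow> int) \<Rightarrow> nat \<Rightarrow> vec" where
  "vvec N lam i = (if i = 0 then 0 else of_int (lam i) *\<^sub>R (ebas N (i - 1) - ebas N i))"

definition Lambda_even :: "nat \<Rightarrow> (nat \<Rightarrow> int) set" where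
  "Lambda_even N = {lam. (\<forall>i\<in>{1..N}. lam i \<in> {-1, 1}) \<and> (\<Sum>i=1..N. lam i) = 0}"

definition Lambda_odd :: "nat \<Rightarrow> nat \<Rightarrow> (nat \<Rightarrow> int) set" where
  "Lambda_odd j N = {lam. lam j = 0 \<and> (\<forall>i\<in>{1..N}-{j}. lam i \<in> {-1, 1}) \<and> (\<Sum>i=1..N. lam i) = 0}"

definition Delta :: "nat \<Rightarrow> vec set set" where
  "Delta N = (if even N then
      {convex hull (vvec N lam ` {0..N} - {vvec N lam i}) | lam i.
         lam \<in> Lambda_even N \<and> 1 \<le> i \<and> i \<le> N \<and> lam i = lam 1}
    else
      {convex hull ({0} \<union> {of_int (lam i) *\<^sub>R (ebas N (i - 1) - ebas N i) | i. 1 \<le> i \<and> i \<le> N \<and> i \<noteq> j})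
         | lam j. lam \<in> Lambda_odd j N \<and> 1 \<le> j \<and> j \<le> N})"

definition dir_edges :: "nat \<Rightarrow> vec set \<Rightarrow> (nat \<times> nat) set" where
  "dir_edges N T = {(i, j). cyc_edge N i j \<and> ebas N i - ebas N j \<in> T}"

definition primitive :: "nat \<Rightarrow> vec set \<Rightarrow> bool" where
  "primitive N T \<longleftrightarrow> card (dir_edges N T) = N - 1"

end

theory Submission
  imports Defs
begin

lemma lookup_scaleR_pm: "Poly_Mapping.lookup (r *\<^sub>R (x::nat \<Rightarrow>\<^sub>0 real)) i = r * Poly_Mapping.lookup x i"
proof -
  have "finite {i. r * Poly_Mapping.lookup x i \<noteq> 0}"
    by (rule finite_subset[of _ "{i. Poly_Mapping.lookup x i \<noteq> 0}"]) auto
  then show ?thesis by (simp add: scaleR_poly_mapping_def)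
qed

lemma lookup_ebas: "Poly_Mapping.lookup (ebas N i) x = (if 1 \<le> i \<and> i \<le> N - 1 \<and> x = i then 1 else 0)"
  by (auto simp: ebas_def lookup_single)

definition ww :: "nat \<Rightarrow> nat \<Rightarrow> vec" where
  "ww N k = ebas N (k - 1) - ebas N k"

lemma lookup_ww:
  assumes "1 \<le> x" "x \<le> N - 1" "1 \<le> k" "k \<le> N"
  shows "Poly_Mapping.lookup (ww N k) x = (if k = x + 1 then 1 else 0) - (if k = x then 1 else 0)"
  using assms by (auto simp: ww_def lookup_minus lookup_ebas)

lemma hull_sub:
  fixes g :: "nat \<Rightarrow> vec"
  assumes "finite K"
  shows "convex hull (insert 0 (g ` K)) \<subseteq>
     {y. \<exists>c. (\<forall>k\<in>K. 0 \<le> c k) \<and> sum c K \<le> 1 \<and> y = (\<Sum>k\<in>K. c k *\<^sub>R g k)}"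
    (is "_ \<subseteq> ?S")
proof (rule hull_minimal)
  show "insert 0 (g ` K) \<subseteq> ?S"
  proof
    fix y assume "y \<in> insert 0 (g ` K)"
    then show "y \<in> ?S"
    proof
      assume "y = 0" then show ?thesis by (intro CollectI exI[of _ "\<lambda>_. 0"]) auto
    next
      assume "y \<in> g ` K"
      then obtain j where j: "j \<in> K" "y = g j" by auto
      have "(\<Sum>k\<in>K. (if k = j then 1 else 0) *\<^sub>R g k) = (\<Sum>k\<in>K. if k = j then g k else 0)"
        by (rule sum.cong) auto
      also have "\<dots> = g j" using j assms by simp
      finally show ?thesis
        apply (intro CollectI exI[of _ "\<lambda>k. if k = j then 1 else 0"])
        using j assms by auto
    qed
  qed
  show "convex ?S"
    unfolding convex_def
  proof (intro ballI allI impI)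
    fix x y u v assume xy: "x \<in> ?S" "y \<in> ?S" and uv: "0 \<le> (u::real)" "0 \<le> v" "u + v = 1"
    from xy obtain c d where c: "\<forall>k\<in>K. 0 \<le> c k" "sum c K \<le> 1" "x = (\<Sum>k\<in>K. c k *\<^sub>R g k)"
      and d: "\<forall>k\<in>K. 0 \<le> d k" "sum d K \<le> 1" "y = (\<Sum>k\<in>K. d k *\<^sub>R g k)" by auto
    have "sum (\<lambda>k. u * c k + v * d k) K = u * sum c K + v * sum d K"
      by (simp add: sum.distrib sum_distrib_left)
    also have "\<dots> \<le> u * 1 + v * 1"
      using c d uv by (intro add_mono mult_left_mono) auto
    finally have s: "sum (\<lambda>k. u * c k + v * d k) K \<le> 1" using uv by simp
    have "u *\<^sub>R x + v *\<^sub>R y = (\<Sum>k\<in>K. (u * c k + v * d k) *\<^sub>R g k)"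
      by (simp add: c d scaleR_sum_right sum.distrib scaleR_add_left)
    then show "u *\<^sub>R x + v *\<^sub>R y \<in> ?S"
      using s c d uv by (intro CollectI exI[of _ "\<lambda>k. u * c k + v * d k"]) auto
  qed
qed

lemma core:
  fixes s :: "nat \<Rightarrow> real" and sg :: real
  assumes N: "N \<ge> 3" and i: "1 \<le> i" "i \<le> N" and K: "K = {1..N} - {i}"
    and s: "\<forall>k\<in>K. s k \<in> {-1, 1}" and m: "1 \<le> m" "m \<le> N" and sg: "sg \<in> {-1, 1}"
    and mem: "sg *\<^sub>R ww N m \<in> convex hull (insert 0 ((\<lambda>k. s k *\<^sub>R ww N k) ` K))"
  shows "m \<in> K \<and> s m = sg"
proof -
  have fK: "finite K" using K by simp
  from hull_sub[OF fK] mem obtain c where c: "\<forall>k\<in>K. 0 \<le> c k" "sum c K \<le> 1"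
    and eq: "sg *\<^sub>R ww N m = (\<Sum>k\<in>K. c k *\<^sub>R (s k *\<^sub>R ww N k))" by blast
  define A where "A k = (if k \<in> K then c k * s k else 0)" for k
  have diff: "sg * ((if m = x + 1 then 1 else 0) - (if m = x then 1 else 0)) = A (x + 1) - A x"
    if x: "1 \<le> x" "x \<le> N - 1" for x
  proof -
    have "sg * ((if m = x + 1 then 1 else 0) - (if m = x then 1 else 0))
        = Poly_Mapping.lookup (sg *\<^sub>R ww N m) x"
      using x m by (simp add: lookup_scaleR_pm lookup_ww)
    also have "\<dots> = (\<Sum>k\<in>K. c k * s k * Poly_Mapping.lookup (ww N k) x)"
      by (simp add: eq lookup_sum lookup_scaleR_pm)
    also have "\<dots> = (\<Sum>k\<in>K. (if k = x + 1 then c k * s k else 0) - (if k = x then c k * s k else 0))"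
      by (rule sum.cong) (use x K in \<open>auto simp: lookup_ww\<close>)
    also have "\<dots> = A (x + 1) - A x"
      by (simp add: sum_subtractf fK A_def)
    finally show ?thesis .
  qed
  have const: "A k - (if m = k then sg else 0) = A 1 - (if m = 1 then sg else 0)"
    if "1 \<le> k" "k \<le> N" for k
    using that
  proof (induction k)
    case 0 then show ?case by simp
  next
    case (Suc k)
    show ?case
    proof (cases "k = 0")
      case True then show ?thesis by simp
    next
      case False
      then have "A (k + 1) - A k = sg * ((if m = k + 1 then 1 else 0) - (if m = k then 1 else 0))"
        using diff[of k] Suc.prems by simp
      then show ?thesis using Suc False by (auto split: if_splits)
    qed
  qed
  have Ai: "A i = 0" using K by (simp add: A_def)
  have Ak: "A k = (if m = k then sg else 0) - (if m = i then sg else 0)" if "1 \<le> k" "k \<le> N" for k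
    using const[OF that] const[OF i] Ai by simp
  show ?thesis
  proof (cases "m = i")
    case False
    then have "A m = sg" using Ak[OF m] by simp
    then have mK: "m \<in> K" and cm: "c m * s m = sg" using sg by (auto simp: A_def split: if_splits)
    have "c m \<ge> 0" using c mK by auto
    then have "s m = sg" using cm s mK sg by auto
    then show ?thesis using mK by simp
  next
    case True
    have "c k = 1" if "k \<in> K" for k
    proof -
      have "A k = - sg" using Ak[of k] that K True by auto
      then have "c k * s k = - sg" using that by (simp add: A_def)
      moreover have "s k = -1 \<or> s k = 1" using s that by auto
      moreover have "c k \<ge> 0" using c that by auto
      ultimately show ?thesis using sg by auto
    qed
    then have "sum c K = card K" by simp
    moreover have "card K = N - 1" using K i by simp
    ultimately show ?thesis using c N by simp
  qed
qed

lemma ebas_mod: "k \<le> N \<Longrightarrow> ebas N (k mod N) = ebas N k"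
  by (cases "k = N") (auto simp: ebas_def)

lemma edges_count:
  fixes s :: "nat \<Rightarrow> real"
  assumes N: "N \<ge> 3" and i: "1 \<le> i" "i \<le> N" and K: "K = {1..N} - {i}"
    and s: "\<forall>k\<in>K. s k \<in> {-1, 1}"
    and T: "T = convex hull (insert 0 ((\<lambda>k. s k *\<^sub>R ww N k) ` K))"
  shows "primitive N T"
proof -
  define f where "f k = (if s k = 1 then (k - 1, k mod N) else (k mod N, k - 1))" for k
  have modk: "k mod N = (if k = N then 0 else k)" if "k \<in> K" for k
    using that K by auto
  have "dir_edges N T = f ` K"
  proof
    show "dir_edges N T \<subseteq> f ` K"
    proof
      fix e assume "e \<in> dir_edges N T"
      then obtain p q where e: "e = (p, q)" and ce: "cyc_edge N p q"
        and mem: "ebas N p - ebas N q \<in> T" by (auto simp: dir_edges_def)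
      from ce have pq: "p < N" "q < N" "q = Suc p mod N \<or> p = Suc q mod N"
        by (auto simp: cyc_edge_def)
      from pq(3) show "e \<in> f ` K"
      proof
        assume q: "q = Suc p mod N"
        have "ebas N p - ebas N q = 1 *\<^sub>R ww N (Suc p)"
          using q pq ebas_mod[of "Suc p" N] by (simp add: ww_def)
        with mem have "Suc p \<in> K \<and> s (Suc p) = 1"
          using core[OF N i K s, of "Suc p" 1] T pq by simp
        then show ?thesis using e q by (auto simp: f_def intro!: image_eqI[of _ _ "Suc p"])
      next
        assume p: "p = Suc q mod N"
        have "ebas N p - ebas N q = (-1) *\<^sub>R ww N (Suc q)"
          using p pq ebas_mod[of "Suc q" N] by (simp add: ww_def)
        with mem have "Suc q \<in> K \<and> s (Suc q) = -1"
          using core[OF N i K s, of "Suc q" "-1"] T pq by simp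
        then show ?thesis using e p by (auto simp: f_def intro!: image_eqI[of _ _ "Suc q"])
      qed
    qed
    show "f ` K \<subseteq> dir_edges N T"
    proof
      fix e assume "e \<in> f ` K"
      then obtain k where k: "k \<in> K" "e = f k" by auto
      have kr: "1 \<le> k" "k \<le> N" using k K by auto
      have inT: "s k *\<^sub>R ww N k \<in> T" using k T by (auto intro: hull_inc)
      show "e \<in> dir_edges N T"
      proof (cases "s k = 1")
        case True
        have "cyc_edge N (k - 1) (k mod N)" using kr N modk[OF k(1)]
          by (auto simp: cyc_edge_def)
        moreover have "ebas N (k - 1) - ebas N (k mod N) = s k *\<^sub>R ww N k"
          using True kr ebas_mod[of k N] by (simp add: ww_def)
        ultimately show ?thesis using k True inT by (simp add: f_def dir_edges_def)
      next
        case False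
        then have sk: "s k = -1" using s k by auto
        have "cyc_edge N (k mod N) (k - 1)" using kr N modk[OF k(1)]
          by (auto simp: cyc_edge_def)
        moreover have "ebas N (k mod N) - ebas N (k - 1) = s k *\<^sub>R ww N k"
          using sk kr ebas_mod[of k N] by (simp add: ww_def)
        ultimately show ?thesis using k False inT by (simp add: f_def dir_edges_def)
      qed
    qed
  qed
  moreover have "inj_on f K"
  proof
    fix a b assume ab: "a \<in> K" "b \<in> K" "f a = f b"
    have r: "1 \<le> a" "a \<le> N" "1 \<le> b" "b \<le> N" using ab K by auto
    show "a = b"
      using ab(3) r N modk[OF ab(1)] modk[OF ab(2)]
      by (auto simp: f_def split: if_splits)
  qed
  moreover have "card K = N - 1" using K i by simp
  ultimately show ?thesis by (simp add: primitive_def card_image)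
qed

theorem proposition9p3:
  fixes N :: nat and T :: "vec set"
  assumes "N \<ge> 3" and "T \<in> Delta N"
  shows "primitive N T"
proof (cases "even N")
  case True
  with assms obtain lam i where T: "T = convex hull (vvec N lam ` {0..N} - {vvec N lam i})"
    and lam: "lam \<in> Lambda_even N" and i: "1 \<le> i" "i \<le> N"
    by (auto simp: Delta_def)
  define K where "K = {1..N} - {i}"
  define s where "s k = (real_of_int (lam k))" for k
  have sK: "\<forall>k\<in>{1..N}. s k \<in> {-1, 1}" using lam by (auto simp: Lambda_even_def s_def)
  then have sK': "\<forall>k\<in>K. s k \<in> {-1, 1}" by (auto simp: K_def)
  let ?H = "convex hull (insert 0 ((\<lambda>k. s k *\<^sub>R ww N k) ` K))"
  have vv: "vvec N lam k = s k *\<^sub>R ww N k" if "k \<ge> 1" for k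
    using that by (simp add: vvec_def s_def ww_def)
  have neq: "x \<noteq> vvec N lam i" if "x \<in> insert 0 ((\<lambda>k. s k *\<^sub>R ww N k) ` K)" for x
  proof
    assume "x = vvec N lam i"
    then have "s i *\<^sub>R ww N i \<in> ?H" using that vv i by (auto intro: hull_inc)
    then have "i \<in> K" using core[OF assms(1) i K_def sK', of i "s i"] sK i by auto
    then show False by (simp add: K_def)
  qed
  have "vvec N lam ` {0..N} - {vvec N lam i} = insert 0 ((\<lambda>k. s k *\<^sub>R ww N k) ` K)"
  proof
    show "vvec N lam ` {0..N} - {vvec N lam i} \<subseteq> insert 0 ((\<lambda>k. s k *\<^sub>R ww N k) ` K)"
    proof
      fix x assume "x \<in> vvec N lam ` {0..N} - {vvec N lam i}"
      then obtain k where k: "k \<le> N" "x = vvec N lam k" "x \<noteq> vvec N lam i" by auto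
      show "x \<in> insert 0 ((\<lambda>k. s k *\<^sub>R ww N k) ` K)"
      proof (cases "k = 0")
        case True then show ?thesis using k by (simp add: vvec_def)
      next
        case False
        then have "k \<in> K" using k by (auto simp: K_def)
        then show ?thesis using k vv False by auto
      qed
    qed
    show "insert 0 ((\<lambda>k. s k *\<^sub>R ww N k) ` K) \<subseteq> vvec N lam ` {0..N} - {vvec N lam i}"
    proof
      fix x assume x: "x \<in> insert 0 ((\<lambda>k. s k *\<^sub>R ww N k) ` K)"
      have "x \<in> vvec N lam ` {0..N}"
      proof (cases "x = 0")
        case True then show ?thesis by (force simp: vvec_def intro: image_eqI[of _ _ 0])
      next
        case False
        then obtain k where "k \<in> K" "x = s k *\<^sub>R ww N k" using x by auto
        then show ?thesis using vv[of k] by (auto simp: K_def intro!: image_eqI[of _ _ k])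
      qed
      then show "x \<in> vvec N lam ` {0..N} - {vvec N lam i}" using neq[OF x] by simp
    qed
  qed
  then have "T = ?H" using T by simp
  then show ?thesis using edges_count[OF assms(1) i K_def sK'] by simp
next
  case False
  with assms obtain lam j where T: "T = convex hull ({0} \<union>
      {of_int (lam i) *\<^sub>R (ebas N (i - 1) - ebas N i) | i. 1 \<le> i \<and> i \<le> N \<and> i \<noteq> j})"
    and lam: "lam \<in> Lambda_odd j N" and j: "1 \<le> j" "j \<le> N"
    by (auto simp: Delta_def)
  define K where "K = {1..N} - {j}"
  define s where "s k = (real_of_int (lam k))" for k
  have sK': "\<forall>k\<in>K. s k \<in> {-1, 1}"
  proof
    fix k assume "k \<in> K"
    then have "lam k = -1 \<or> lam k = 1" using lam by (auto simp: Lambda_odd_def K_def)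
    then show "s k \<in> {-1, 1}" by (auto simp: s_def)
  qed
  have "({0} \<union> {of_int (lam i) *\<^sub>R (ebas N (i - 1) - ebas N i) | i. 1 \<le> i \<and> i \<le> N \<and> i \<noteq> j})
      = insert 0 ((\<lambda>k. s k *\<^sub>R ww N k) ` K)"
    by (auto simp: K_def s_def ww_def)
  then have "T = convex hull (insert 0 ((\<lambda>k. s k *\<^sub>R ww N k) ` K))" using T by simp
  then show ?thesis using edges_count[OF assms(1) j K_def sK'] by simp
qed

end
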